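(* For every DBI normal formula $\varphi$ and every pointed Kripke model $(\mathcal{M},v)$, the pointed update of $(\mathcal{M},v)$ with $(\mathcal{U}_\varphi,0)$ is defined and $\bigl(\mathcal{M}\odot\mathcal{U}_\varphi,(v,0)\bigr)$ is weakly privatized with respect to $\varphi$.
   Context: Agents $\mathcal{A}=\{1,\dots,n\}$, $n>1$; language $\mathcal{L}$: $\varphi ::= p \mid \neg\varphi \mid (\varphi\wedge\varphi)\mid B_i\varphi$, $\top$ the usual tautology. Kripke model $\mathcal{M}=\langle S,R,V\rangle$ (nonempty $S$, $R_i\subseteq S\times S$, $V:\mathit{Prop}\to 2^S$), standard truth. Action model $\mathcal{U}=\langle E,Q,\mathsf{pre}\rangle$ (nonempty $E$, $Q_i\subseteq E\times E$, $\mathsf{pre}:E\to\mathcal{L}$). Frame properties apply to models via their underlying frames. Pointed update of $(\mathcal{M},w)$ with $(\mathcal{U},\alpha)$, defined iff $\mathcal{M},w\vDash\mathsf{pre}(\alpha)$: with $T=\{(x,\beta)\in S\times E\mid\mathcal{M},x\vDash\mathsf{pre}(\beta)\}$, $\mathcal{M}\odot\mathcal{U}=\langle S^{\mathcal U},R^{\mathcal U},V^{\mathcal U}\rangle$ where $S^{\mathcal U}$ is the smallest subset of $T$ containing $(w,\alpha)$ closed under: $(x,\beta)\in S^{\mathcal U}$, $(u,\gamma)\in T$, $xR_iu$, $\beta Q_i\gamma$ imply $(u,\gamma)\in S^{\mathcal U}$; $R^{\mathcal U}_i$ relates $(x,\beta),(u,\gamma)\in S^{\mathcal U}$ iff $xR_iu$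 and $\beta Q_i\gamma$; $V^{\mathcal U}(p)=\{(x,\beta)\in S^{\mathcal U}\mid x\in V(p)\}$. Target agents: $\mathsf{ta}(p)=\varnothing$, $\mathsf{ta}(\neg\phi)=\mathsf{ta}(\phi)$, $\mathsf{ta}(\phi\wedge\psi)=\mathsf{ta}(\phi)\cup\mathsf{ta}(\psi)$, $\mathsf{ta}(B_i\phi)=\{i\}$. DBI formulas: $\varphi ::= B_i\xi \mid B_i(\xi\wedge\varphi)\mid(\varphi\wedge\varphi)\mid B_i\varphi$, $\xi$ purely propositional. DBI normal: $B_i\xi$ always; $B_i\varphi$, $B_i(\xi\wedge\varphi)$ iff $\varphi$ DBI normal and $i\notin\mathsf{ta}(\varphi)$; $\varphi\wedge\psi$ iff both DBI normal and $\mathsf{ta}(\varphi)\cap\mathsf{ta}(\psi)=\varnothing$. Action model $\mathcal{U}_\varphi=\langle E^\varphi,Q^\varphi,\mathsf{pre}^\varphi\rangle$ for DBI normal $\varphi$, recursively; always $E^\varphi=\{0,-1\}\sqcup D^\varphi$, $\varnothing\ne D^\varphi\subseteq\{1,2,\dots\}$, $\mathsf{pre}^\varphi(0)=\mathsf{pre}^\varphi(-1)=\top$; $\underline{Q}_j:=Q_j\cap((E\setminus\{0\})\times(E\setminus\{0\}))$. (1) $\varphi=B_i\xi$: $D=\{m\}$, $\mathsf{pre}(m)=\xi$, $Q_j=\{(0,-1),(m,-1),(-1,-1)\}$ ($j\ne i$), $Q_i=\{(0,m),(m,m),(-1,-1)\}$. (2) $\varphi=B_i\psi$: fresh $m\ge1$,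 $m\notin D^\psi$; $D^\varphi=D^\psi\sqcup\{m\}$; $\mathsf{pre}^\varphi$ extends $\mathsf{pre}^\psi$ with $\mathsf{pre}^\varphi(m)=\top$; $Q^\varphi_j=\underline{Q}^\psi_j\cup\{(0,-1)\}\cup\{(m,k)\mid(0,k)\in Q^\psi_j\}$ ($j\ne i$); $Q^\varphi_i=\underline{Q}^\psi_i\cup\{(0,m),(m,m)\}$. (3) $\varphi=B_i(\xi\wedge\psi)$: as (2) but $\mathsf{pre}^\varphi(m)=\xi$. (4) $\varphi=\psi\wedge\theta$: with $D^\psi\cap D^\theta=\varnothing$, $D^\varphi=D^\psi\sqcup D^\theta$, $\mathsf{pre}^\varphi=\mathsf{pre}^\psi\cup\mathsf{pre}^\theta$, $Q^\varphi_j=\underline{Q}^\psi_j\cup\underline{Q}^\theta_j\cup\{(0,k)\mid(0,k)\in Q^\psi_j\cup Q^\theta_j, k\in D^\psi\sqcup D^\theta\}\cup\{(0,-1)\mid\text{no such }k\text{ exists}\}$. Modal syntactic tree $\mathcal{T}_\varphi$: $\mathcal{T}_{B_i\xi}$ is a root with one child labeled $B_i$; $\mathcal{T}_{B_i\psi}=\mathcal{T}_{B_i(\xi\wedge\psi)}$ is obtained by labeling the root of $\mathcal{T}_\psi$ with $B_i$ and making it the only child of a new unlabeled root; $\mathcal{T}_{\psi\wedge\theta}$ is the disjoint union of $\mathcal{T}_\psi,\mathcal{T}_\theta$ with roots identified. $RootP(\varphi)$: paths from the root (length $\ge0$); $\mathsf{agSeq}(\sigma)$: agents labeling the non-root nodes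 of $\sigma$, in order. Clusters: for a frame $\mathcal{F}=\langle W,R\rangle$, $w\in W$, $C^{i_1,\dots,i_l}_{\mathcal{F},w}=\{u\mid\exists u_2,\dots,u_l:\ wR_{i_1}u_2\cdots u_lR_{i_l}u\}$, $C^\varepsilon_{\mathcal{F},w}=\{w\}$. $\mathcal{A}^l_{\mathrm{nsr}}$: agent sequences of length $l$ without two successive equal agents. $(\mathcal{F},w)$ is weakly privatized w.r.t. $\varphi$ iff for every $\sigma\in RootP(\varphi)$ and every $s\in\bigcup_{l\ge0}\mathcal{A}^l_{\mathrm{nsr}}\setminus\{\mathsf{agSeq}(\sigma)\}$, $C^{\mathsf{agSeq}(\sigma)}_{\mathcal{F},w}\cap C^s_{\mathcal{F},w}=\varnothing$. *)

theory Defs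
  imports Main
begin

text \<open>Agents are natural numbers; the agent set is {1..n} with n > 1 (a parameter).\<close>

datatype 'p fm = Prop 'p | Neg "'p fm" | Conj "'p fm" "'p fm" | Bel nat "'p fm"

text \<open>The usual tautology (any propositional letter works).\<close>
definition top :: "'p fm" where
  "top = Neg (Conj (Prop undefined) (Neg (Prop undefined)))"

fun agents :: "'p fm \<Rightarrow> nat set" where
  "agents (Prop p) = {}"
| "agents (Neg a) = agents a"
| "agents (Conj a b) = agents a \<union> agents b"
| "agents (Bel i a) = insert i (agents a)"

fun is_prop :: "'p fm \<Rightarrow> bool" where
  "is_prop (Prop p) = True"
| "is_prop (Neg a) = is_prop a"
| "is_prop (Conj a b) = (is_prop a \<and> is_prop b)"
| "is_prop (Bel i a) = False"

text \<open>Kripke semantics; a model is given by its relations R and valuation V,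
  with state space the whole (nonempty) type 's.\<close>
fun sat :: "(nat \<Rightarrow> ('s \<times> 's) set) \<Rightarrow> ('p \<Rightarrow> 's set) \<Rightarrow> 's \<Rightarrow> 'p fm \<Rightarrow> bool" where
  "sat R V w (Prop p) = (w \<in> V p)"
| "sat R V w (Neg a) = (\<not> sat R V w a)"
| "sat R V w (Conj a b) = (sat R V w a \<and> sat R V w b)"
| "sat R V w (Bel i a) = (\<forall>u. (w, u) \<in> R i \<longrightarrow> sat R V u a)"

fun ta :: "'p fm \<Rightarrow> nat set" where
  "ta (Prop p) = {}"
| "ta (Neg a) = ta a"
| "ta (Conj a b) = ta a \<union> ta b"
| "ta (Bel i a) = {i}"

inductive dbi :: "'p fm \<Rightarrow> bool" where
  "is_prop \<xi> \<Longrightarrow> dbi (Bel i \<xi>)"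
| "is_prop \<xi> \<Longrightarrow> dbi \<phi> \<Longrightarrow> dbi (Bel i (Conj \<xi> \<phi>))"
| "dbi \<phi> \<Longrightarrow> dbi \<psi> \<Longrightarrow> dbi (Conj \<phi> \<psi>)"
| "dbi \<phi> \<Longrightarrow> dbi (Bel i \<phi>)"

inductive dbi_normal :: "'p fm \<Rightarrow> bool" where
  "is_prop \<xi> \<Longrightarrow> dbi_normal (Bel i \<xi>)"
| "dbi_normal \<phi> \<Longrightarrow> i \<notin> ta \<phi> \<Longrightarrow> dbi_normal (Bel i \<phi>)"
| "is_prop \<xi> \<Longrightarrow> dbi_normal \<phi> \<Longrightarrow> i \<notin> ta \<phi> \<Longrightarrow> dbi_normal (Bel i (Conj \<xi> \<phi>))"
| "dbi_normal \<phi> \<Longrightarrow> dbi_normal \<psi> \<Longrightarrow> ta \<phi> \<inter> ta \<psi> = {} \<Longrightarrow> dbi_normal (Conj \<phi> \<psi>)"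

text \<open>An action model U_phi is represented by (D, Q, pre): events E = {0,-1} \<union> D (integers),
  D a nonempty set of positive integers, Q j the relation of agent j, pre the precondition map.
  Since the construction involves free choices of fresh labels, it is an inductive relation:
  Uphi phi D Q pre holds for every admissible outcome of the recursive construction.\<close>

definition Ev :: "int set \<Rightarrow> int set" where
  "Ev D = {0, -1} \<union> D"

definition uQ :: "int set \<Rightarrow> (nat \<Rightarrow> (int \<times> int) set) \<Rightarrow> nat \<Rightarrow> (int \<times> int) set" where
  "uQ D Q j = Q j \<inter> ((Ev D - {0}) \<times> (Ev D - {0}))"

inductive Uphi :: "'p fm \<Rightarrow> int set \<Rightarrow> (nat \<Rightarrow> (int \<times> int) set) \<Rightarrow> (int \<Rightarrow> 'p fm) \<Rightarrow> bool" where
  base: "is_prop \<xi> \<Longrightarrow> m \<ge> 1 \<Longrightarrow>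
    Uphi (Bel i \<xi>) {m}
      (\<lambda>j. if j = i then {(0, m), (m, m), (-1, -1)} else {(0, -1), (m, -1), (-1, -1)})
      (\<lambda>e. if e = m then \<xi> else top)"
| box: "Uphi \<psi> D Q pre \<Longrightarrow> m \<ge> 1 \<Longrightarrow> m \<notin> D \<Longrightarrow>
    Uphi (Bel i \<psi>) (insert m D)
      (\<lambda>j. if j = i then uQ D Q j \<union> {(0, m), (m, m)}
           else uQ D Q j \<union> {(0, -1)} \<union> {(m, k) | k. (0, k) \<in> Q j})
      (pre(m := top))"
| boxconj: "is_prop \<xi> \<Longrightarrow> Uphi \<psi> D Q pre \<Longrightarrow> m \<ge> 1 \<Longrightarrow> m \<notin> D \<Longrightarrow>
    Uphi (Bel i (Conj \<xi> \<psi>)) (insert m D)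
      (\<lambda>j. if j = i then uQ D Q j \<union> {(0, m), (m, m)}
           else uQ D Q j \<union> {(0, -1)} \<union> {(m, k) | k. (0, k) \<in> Q j})
      (pre(m := \<xi>))"
| conj: "Uphi \<psi> D1 Q1 p1 \<Longrightarrow> Uphi \<theta> D2 Q2 p2 \<Longrightarrow> D1 \<inter> D2 = {} \<Longrightarrow>
    Uphi (Conj \<psi> \<theta>) (D1 \<union> D2)
      (\<lambda>j. uQ D1 Q1 j \<union> uQ D2 Q2 j
           \<union> {(0, k) | k. (0, k) \<in> Q1 j \<union> Q2 j \<and> k \<in> D1 \<union> D2}
           \<union> (if \<exists>k. (0, k) \<in> Q1 j \<union> Q2 j \<and> k \<in> D1 \<union> D2 then {} else {(0, -1)}))
      (\<lambda>e. if e \<in> D1 then p1 e else p2 e)"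

text \<open>States of M \<odot> U reachable from (w, alpha) (the smallest subset of T containing (w,alpha)
  closed under the agents' relations); agents range over {1..n}.\<close>
inductive_set SU :: "nat \<Rightarrow> (nat \<Rightarrow> ('s \<times> 's) set) \<Rightarrow> ('p \<Rightarrow> 's set) \<Rightarrow> int set
    \<Rightarrow> (nat \<Rightarrow> (int \<times> int) set) \<Rightarrow> (int \<Rightarrow> 'p fm) \<Rightarrow> 's \<Rightarrow> int \<Rightarrow> ('s \<times> int) set"
  for n R V D Q pre w \<alpha> where
  start: "\<alpha> \<in> Ev D \<Longrightarrow> sat R V w (pre \<alpha>) \<Longrightarrow> (w, \<alpha>) \<in> SU n R V D Q pre w \<alpha>"
| step: "(x, \<beta>) \<in> SU n R V D Q pre w \<alpha> \<Longrightarrow> i \<in> {1..n} \<Longrightarrow> (x, u) \<in> R i \<Longrightarrow> (\<beta>, \<gamma>) \<in> Q i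
    \<Longrightarrow> \<gamma> \<in> Ev D \<Longrightarrow> sat R V u (pre \<gamma>) \<Longrightarrow> (u, \<gamma>) \<in> SU n R V D Q pre w \<alpha>"

definition RU :: "nat \<Rightarrow> (nat \<Rightarrow> ('s \<times> 's) set) \<Rightarrow> ('p \<Rightarrow> 's set) \<Rightarrow> int set
    \<Rightarrow> (nat \<Rightarrow> (int \<times> int) set) \<Rightarrow> (int \<Rightarrow> 'p fm) \<Rightarrow> 's \<Rightarrow> int \<Rightarrow> nat \<Rightarrow> (('s \<times> int) \<times> ('s \<times> int)) set" where
  "RU n R V D Q pre w \<alpha> i =
     {(a, b). a \<in> SU n R V D Q pre w \<alpha> \<and> b \<in> SU n R V D Q pre w \<alpha>
        \<and> (fst a, fst b) \<in> R i \<and> (snd a, snd b) \<in> Q i}"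

datatype mtree = MNode (lab: "nat option") (children: "mtree list")

fun relabel :: "nat \<Rightarrow> mtree \<Rightarrow> mtree" where
  "relabel i (MNode l cs) = MNode (Some i) cs"

fun mtreeOf :: "'p fm \<Rightarrow> mtree" where
  "mtreeOf (Bel i (Conj \<xi> \<psi>)) =
     (if is_prop (Conj \<xi> \<psi>) then MNode None [MNode (Some i) []]
      else if is_prop \<xi> then MNode None [relabel i (mtreeOf \<psi>)]
      else MNode None [relabel i (mtreeOf (Conj \<xi> \<psi>))])"
| "mtreeOf (Bel i \<phi>) =
     (if is_prop \<phi> then MNode None [MNode (Some i) []] else MNode None [relabel i (mtreeOf \<phi>)])"
| "mtreeOf (Conj \<psi> \<theta>) = MNode None (children (mtreeOf \<psi>) @ children (mtreeOf \<theta>))"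
| "mtreeOf _ = MNode None []"

inductive dpath :: "mtree \<Rightarrow> mtree list \<Rightarrow> bool" where
  "dpath t [t]"
| "c \<in> set (children t) \<Longrightarrow> dpath c p \<Longrightarrow> dpath t (t # p)"

definition RootP :: "'p fm \<Rightarrow> mtree list set" where
  "RootP \<phi> = {p. dpath (mtreeOf \<phi>) p}"

definition agSeq :: "mtree list \<Rightarrow> nat list" where
  "agSeq p = map (the \<circ> lab) (tl p)"

fun cluster :: "(nat \<Rightarrow> ('a \<times> 'a) set) \<Rightarrow> 'a \<Rightarrow> nat list \<Rightarrow> 'a set" where
  "cluster R w [] = {w}"
| "cluster R w (i # s) = (\<Union>u \<in> R i `` {w}. cluster R u s)"

definition nsr :: "nat \<Rightarrow> nat list \<Rightarrow> bool" where
  "nsr n s \<longleftrightarrow> set s \<subseteq> {1..n} \<and> (\<forall>k. Suc k < length s \<longrightarrow> s ! k \<noteq> s ! Suc k)"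

definition weakly_privatized :: "nat \<Rightarrow> (nat \<Rightarrow> ('a \<times> 'a) set) \<Rightarrow> 'a \<Rightarrow> 'p fm \<Rightarrow> bool" where
  "weakly_privatized n R w \<phi> \<longleftrightarrow>
     (\<forall>\<sigma> \<in> RootP \<phi>. \<forall>s. nsr n s \<and> s \<noteq> agSeq \<sigma> \<longrightarrow>
        cluster R w (agSeq \<sigma>) \<inter> cluster R w s = {})"

end

theory Submission
  imports Defs
begin

fun reach :: "(nat \<Rightarrow> (int \<times> int) set) \<Rightarrow> int \<Rightarrow> nat list \<Rightarrow> int \<Rightarrow> bool" where
  "reach Q x [] y = (x = y)"
| "reach Q x (j # s) y = (\<exists>z. (x, z) \<in> Q j \<and> reach Q z s y)"

definition nrep :: "nat list \<Rightarrow> bool" where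
  "nrep s \<longleftrightarrow> (\<forall>k. Suc k < length s \<longrightarrow> s ! k \<noteq> s ! Suc k)"

lemma nrep_tl: "nrep (j # s) \<Longrightarrow> nrep s"
  unfolding nrep_def
proof (intro allI impI)
  fix k assume h: "\<forall>k. Suc k < length (j # s) \<longrightarrow> (j # s) ! k \<noteq> (j # s) ! Suc k" "Suc k < length s"
  from h(1)[rule_format, of "Suc k"] h(2) show "s ! k \<noteq> s ! Suc k" by simp
qed

lemma nrep_hd: "nrep (j # k # s) \<Longrightarrow> j \<noteq> k"
  unfolding nrep_def by (erule allE[of _ 0]) simp

lemma nsr_nrep: "nsr n s \<Longrightarrow> nrep s"
  unfolding nsr_def nrep_def by blast

lemma reach_sink:
  assumes "\<forall>j y. (-1, y) \<in> Q j \<longrightarrow> y = -1"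
  shows "reach Q (-1) s y \<Longrightarrow> y = -1"
  by (induction s) (use assms in auto)

lemma reach_transfer:
  assumes "\<forall>j x y. x \<in> S \<longrightarrow> (x, y) \<in> Q j \<longrightarrow> (x, y) \<in> Q' j \<and> y \<in> S"
  shows "x \<in> S \<Longrightarrow> reach Q x s y \<Longrightarrow> reach Q' x s y \<and> y \<in> S"
  by (induction s arbitrary: x) (use assms in fastforce)+

lemma reach_not0:
  assumes "\<forall>j x. (x, 0) \<notin> Q j"
  shows "reach Q x s 0 \<Longrightarrow> s = [] \<and> x = 0"
  by (induction s arbitrary: x) (use assms in auto)

lemma nil_ok:
  assumes "\<forall>j x. (x, 0) \<notin> Q j"
  shows "(\<exists>e. reach Q 0 [] e) \<and> (\<forall>e. reach Q 0 [] e \<longrightarrow> e \<noteq> -1 \<and> (\<forall>s. nrep s \<and> reach Q 0 s e \<longrightarrow> s = []))"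
  using reach_not0[OF assms] by auto

lemma dpath_nil: "\<not> dpath t []"
  by (auto elim: dpath.cases)

lemma dpath_cons: "dpath t (x # p) \<longleftrightarrow> x = t \<and> (p = [] \<or> (\<exists>c\<in>set (children t). dpath c p))"
  apply (rule iffI)
   apply (erule dpath.cases; auto)
  apply (auto intro: dpath.intros)
  done

definition CP :: "mtree list \<Rightarrow> nat list set" where
  "CP cs = {map (the \<circ> lab) p | p. \<exists>c\<in>set cs. dpath c p}"

lemma AS_eq: "agSeq ` RootP \<phi> = insert [] (CP (children (mtreeOf \<phi>)))"
proof -
  let ?T = "mtreeOf \<phi>"
  have "agSeq ` RootP \<phi> \<subseteq> insert [] (CP (children ?T))"
  proof
    fix a assume "a \<in> agSeq ` RootP \<phi>"
    then obtain p where p: "dpath ?T p" "a = agSeq p" unfolding RootP_def by auto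
    then obtain x p' where "p = x # p'" using dpath_nil by (cases p) auto
    with p show "a \<in> insert [] (CP (children ?T))"
      unfolding CP_def agSeq_def by (auto simp: dpath_cons)
  qed
  moreover have "insert [] (CP (children ?T)) \<subseteq> agSeq ` RootP \<phi>"
  proof
    fix a assume "a \<in> insert [] (CP (children ?T))"
    then consider "a = []" | p c where "a = map (the \<circ> lab) p" "c \<in> set (children ?T)" "dpath c p"
      unfolding CP_def by auto
    then show "a \<in> agSeq ` RootP \<phi>"
    proof cases
      case 1
      have "[?T] \<in> RootP \<phi>" unfolding RootP_def by (auto intro: dpath.intros)
      then show ?thesis using 1 unfolding agSeq_def by force
    next
      case 2
      have "?T # p \<in> RootP \<phi>" unfolding RootP_def using 2 by (auto simp: dpath_cons)
      then show ?thesis using 2 unfolding agSeq_def by force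
    qed
  qed
  ultimately show ?thesis by blast
qed

lemma CP_append: "CP (xs @ ys) = CP xs \<union> CP ys"
  unfolding CP_def by auto

lemma relabel_eq: "relabel i t = MNode (Some i) (children t)"
  by (cases t) simp

lemma CP_node: "CP [MNode (Some i) cs] = (#) i ` insert [] (CP cs)"
proof -
  have "CP [MNode (Some i) cs] = {map (the \<circ> lab) p | p. dpath (MNode (Some i) cs) p}"
    unfolding CP_def by auto
  also have "\<dots> = {map (the \<circ> lab) (MNode (Some i) cs # p) | p. p = [] \<or> (\<exists>c\<in>set cs. dpath c p)}"
  proof (rule set_eqI, rule iffI)
    fix a assume "a \<in> {map (the \<circ> lab) p | p. dpath (MNode (Some i) cs) p}"
    then obtain p where p: "a = map (the \<circ> lab) p" "dpath (MNode (Some i) cs) p" by auto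
    then obtain x p' where "p = x # p'" using dpath_nil by (cases p) auto
    with p show "a \<in> {map (the \<circ> lab) (MNode (Some i) cs # p) | p. p = [] \<or> (\<exists>c\<in>set cs. dpath c p)}"
      by (auto simp: dpath_cons)
  next
    fix a assume A: "a \<in> {map (the \<circ> lab) (MNode (Some i) cs # p) | p. p = [] \<or> (\<exists>c\<in>set cs. dpath c p)}"
    show "a \<in> {map (the \<circ> lab) p | p. dpath (MNode (Some i) cs) p}"
    proof -
      from A obtain p where p: "a = map (the \<circ> lab) (MNode (Some i) cs # p)" "p = [] \<or> (\<exists>c\<in>set cs. dpath c p)"
        by auto
      have "dpath (MNode (Some i) cs) (MNode (Some i) cs # p)" using p(2) by (simp add: dpath_cons)
      then show ?thesis using p(1) by blast
    qed
  qed
  also have "\<dots> = (#) i ` insert [] (CP cs)"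
    unfolding CP_def by auto
  finally show ?thesis .
qed

lemma mt_prop: "is_prop \<xi> \<Longrightarrow> children (mtreeOf (Bel i \<xi>)) = [MNode (Some i) []]"
  by (cases \<xi>) auto

lemma mt_box: "\<not> is_prop \<psi> \<Longrightarrow> (\<forall>a b. \<psi> = Conj a b \<longrightarrow> \<not> is_prop a)
  \<Longrightarrow> children (mtreeOf (Bel i \<psi>)) = [relabel i (mtreeOf \<psi>)]"
  by (cases \<psi>) auto

lemma mt_boxconj: "is_prop \<xi> \<Longrightarrow> \<not> is_prop \<psi>
  \<Longrightarrow> children (mtreeOf (Bel i (Conj \<xi> \<psi>))) = [relabel i (mtreeOf \<psi>)]"
  by simp

lemma mt_conj: "children (mtreeOf (Conj a b)) = children (mtreeOf a) @ children (mtreeOf b)"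
  by simp

lemma uphi_np: "Uphi \<phi> D Q p \<Longrightarrow> \<not> is_prop \<phi>"
  by (induction rule: Uphi.induct) auto

lemma uphi_conj_np: "Uphi (Conj a b) D Q p \<Longrightarrow> \<not> is_prop a"
  by (erule Uphi.cases) (auto dest: uphi_np)

lemma dbi_np: "dbi_normal \<phi> \<Longrightarrow> \<not> is_prop \<phi>"
  by (induction rule: dbi_normal.induct) auto


definition good :: "int set \<Rightarrow> (nat \<Rightarrow> (int \<times> int) set) \<Rightarrow> nat set \<Rightarrow> nat list set \<Rightarrow> bool" where
 "good D Q T A \<longleftrightarrow> (\<forall>x\<in>D. x \<ge> 1)
   \<and> (\<forall>j x y. (x, y) \<in> Q j \<longrightarrow> x \<in> Ev D \<and> y \<in> Ev D \<and> y \<noteq> 0)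
   \<and> (\<forall>j y. (-1, y) \<in> Q j \<longrightarrow> y = -1) \<and> (\<forall>j. (-1, -1) \<in> Q j)
   \<and> (\<forall>j k. (0, k) \<in> Q j \<and> k \<noteq> -1 \<longrightarrow> j \<in> T)
   \<and> (\<forall>a\<in>A. (\<exists>e. reach Q 0 a e) \<and>
        (\<forall>e. reach Q 0 a e \<longrightarrow> e \<noteq> -1 \<and> (\<forall>s. nrep s \<and> reach Q 0 s e \<longrightarrow> s = a)))"

lemma good_base:
  assumes m: "m \<ge> 1"
  shows "good {m} (\<lambda>j. if j = i then {(0, m), (m, m), (-1, -1)} else {(0, -1), (m, -1), (-1, -1)}) {i} {[], [i]}"
    (is "good _ ?Q _ _")
proof -
  have no0: "\<forall>j x. (x, 0) \<notin> ?Q j" using m by auto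
  have sink: "\<forall>j y. (-1, y) \<in> ?Q j \<longrightarrow> y = -1" using m by auto
  have ex: "reach ?Q 0 [i] m" by simp
  have all: "reach ?Q 0 [i] e \<Longrightarrow> e = m" for e using m by auto
  have uniq: "s = [i]" if h: "nrep s" "reach ?Q 0 s m" for s
  proof (cases s)
    case Nil then show ?thesis using h m by simp
  next
    case (Cons j s1)
    from h(2) Cons have "\<exists>z. (0, z) \<in> ?Q j \<and> reach ?Q z s1 m" by (simp only: reach.simps)
    then obtain z where z: "(0, z) \<in> ?Q j" "reach ?Q z s1 m" by blast
    show ?thesis
    proof (cases "j = i")
      case False
      then have "z = -1" using z m by auto
      then have "m = -1" using reach_sink[OF sink] z by blast
      then show ?thesis using m by simp
    next
      case True
      then have zm: "z = m" using z m by auto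
      show ?thesis
      proof (cases s1)
        case Nil then show ?thesis using Cons True by simp
      next
        case (Cons j2 s2)
        have "j2 \<noteq> i" using nrep_hd[of j j2 s2] h(1) \<open>s = j # s1\<close> Cons True by simp
        then obtain z2 where "(m, z2) \<in> ?Q j2" "reach ?Q z2 s2 m" using z zm Cons by auto
        then have "z2 = -1" "reach ?Q z2 s2 m" using m \<open>j2 \<noteq> i\<close> by auto
        then have "m = -1" using reach_sink[OF sink] by blast
        then show ?thesis using m by simp
      qed
    qed
  qed
  have A: "\<forall>a\<in>{[], [i]}. (\<exists>e. reach ?Q 0 a e) \<and>
        (\<forall>e. reach ?Q 0 a e \<longrightarrow> e \<noteq> -1 \<and> (\<forall>s. nrep s \<and> reach ?Q 0 s e \<longrightarrow> s = a))"
  proof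
    fix a assume "a \<in> {[], [i]}"
    then consider "a = []" | "a = [i]" by blast
    then show "(\<exists>e. reach ?Q 0 a e) \<and>
        (\<forall>e. reach ?Q 0 a e \<longrightarrow> e \<noteq> -1 \<and> (\<forall>s. nrep s \<and> reach ?Q 0 s e \<longrightarrow> s = a))"
    proof cases
      case 1 then show ?thesis using nil_ok[OF no0] by simp
    next
      case 2
      have "e \<noteq> -1 \<and> (\<forall>s. nrep s \<and> reach ?Q 0 s e \<longrightarrow> s = a)" if "reach ?Q 0 a e" for e
      proof -
        have "e = m" using all that 2 by blast
        then show ?thesis using m uniq 2 by auto
      qed
      then show ?thesis using ex 2 by blast
    qed
  qed
  have E: "\<forall>j x y. (x, y) \<in> ?Q j \<longrightarrow> x \<in> Ev {m} \<and> y \<in> Ev {m} \<and> y \<noteq> 0"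
    using m by (auto simp: Ev_def)
  have Z: "\<forall>j k. (0, k) \<in> ?Q j \<and> k \<noteq> -1 \<longrightarrow> j \<in> {i}"
    by auto
  have S2: "\<forall>j. (-1, -1) \<in> ?Q j" by simp
  show ?thesis
    unfolding good_def
    apply (intro conjI)
    using m apply simp
        apply (fact E)
       apply (fact sink)
      apply (fact S2)
     apply (fact Z)
    apply (fact A)
    done
qed


lemma reach_ConsE: "reach Q x (j # s) y \<Longrightarrow> (\<And>z. (x, z) \<in> Q j \<Longrightarrow> reach Q z s y \<Longrightarrow> P) \<Longrightarrow> P"
  by (simp only: reach.simps) blast

lemma reach_ConsI: "(x, z) \<in> Q j \<Longrightarrow> reach Q z s y \<Longrightarrow> reach Q x (j # s) y"
  by (simp only: reach.simps) blast

lemma good_box: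
  assumes g: "good D Q T A" and m: "m \<ge> 1" "m \<notin> D" and iT: "i \<notin> T"
  defines "Q' \<equiv> \<lambda>j. if j = i then uQ D Q j \<union> {(0, m), (m, m)}
           else uQ D Q j \<union> {(0, -1)} \<union> {(m, k) | k. (0, k) \<in> Q j}"
  shows "good (insert m D) Q' {i} (insert [] ((#) i ` A))"
proof -
  have pos: "\<forall>x\<in>D. x \<ge> 1" and E: "\<forall>j x y. (x, y) \<in> Q j \<longrightarrow> x \<in> Ev D \<and> y \<in> Ev D \<and> y \<noteq> 0"
    and sink: "\<forall>j y. (-1, y) \<in> Q j \<longrightarrow> y = -1" and mm: "\<forall>j. (-1, -1) \<in> Q j"
    and Z: "\<forall>j k. (0, k) \<in> Q j \<and> k \<noteq> -1 \<longrightarrow> j \<in> T"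
    and F: "\<forall>a\<in>A. (\<exists>e. reach Q 0 a e) \<and>
        (\<forall>e. reach Q 0 a e \<longrightarrow> e \<noteq> -1 \<and> (\<forall>s. nrep s \<and> reach Q 0 s e \<longrightarrow> s = a))"
    using g unfolding good_def by blast+
  let ?S = "Ev D - {0}"
  have mS: "m \<notin> Ev D" using m by (auto simp: Ev_def)
  have to: "\<forall>j x y. x \<in> ?S \<longrightarrow> (x, y) \<in> Q j \<longrightarrow> (x, y) \<in> Q' j \<and> y \<in> ?S"
    using E unfolding Q'_def uQ_def by auto
  have from': "\<forall>j x y. x \<in> ?S \<longrightarrow> (x, y) \<in> Q' j \<longrightarrow> (x, y) \<in> Q j \<and> y \<in> ?S"
    using E mS m unfolding Q'_def uQ_def by (auto split: if_splits)
  have f0i: "(0, y) \<in> Q' i \<longleftrightarrow> y = m" for y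
    using m unfolding Q'_def uQ_def by auto
  have f0j: "j \<noteq> i \<Longrightarrow> (0, y) \<in> Q' j \<longleftrightarrow> y = -1" for j y
    using m unfolding Q'_def uQ_def by auto
  have fmi: "(m, y) \<in> Q' i \<longleftrightarrow> y = m" for y
    using mS unfolding Q'_def uQ_def by auto
  have fmj: "j \<noteq> i \<Longrightarrow> (m, y) \<in> Q' j \<longleftrightarrow> (0, y) \<in> Q j" for j y
    using mS m unfolding Q'_def uQ_def by auto
  have sink': "\<forall>j y. (-1, y) \<in> Q' j \<longrightarrow> y = -1"
    using sink m unfolding Q'_def uQ_def by auto
  have mm': "\<forall>j. (-1, -1) \<in> Q' j"
    using mm unfolding Q'_def uQ_def by (auto simp: Ev_def)
  have no0: "\<forall>j x. (x, 0) \<notin> Q' j"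
    using E m unfolding Q'_def uQ_def by auto
  have E': "\<forall>j x y. (x, y) \<in> Q' j \<longrightarrow> x \<in> Ev (insert m D) \<and> y \<in> Ev (insert m D) \<and> y \<noteq> 0"
    using E m unfolding Q'_def uQ_def by (auto simp: Ev_def)
  have Z': "\<forall>j k. (0, k) \<in> Q' j \<and> k \<noteq> -1 \<longrightarrow> j \<in> {i}"
    using f0j by auto
  have fromm: "reach Q 0 (j # r) e \<and> e \<in> ?S" if "j \<noteq> i" "reach Q' m (j # r) e" for j r e
  proof -
    from that(2) obtain z where z: "(m, z) \<in> Q' j" "reach Q' z r e" by (rule reach_ConsE)
    then have z0: "(0, z) \<in> Q j" using fmj that(1) by blast
    then have "z \<in> ?S" using E by blast
    then have "reach Q z r e \<and> e \<in> ?S" using reach_transfer[OF from'] z(2) by blast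
    then show ?thesis using z0 reach_ConsI by fast
  qed
  have F': "(\<exists>e. reach Q' 0 a' e) \<and>
        (\<forall>e. reach Q' 0 a' e \<longrightarrow> e \<noteq> -1 \<and> (\<forall>s. nrep s \<and> reach Q' 0 s e \<longrightarrow> s = a'))"
    if a': "a' \<in> insert [] ((#) i ` A)" for a'
  proof (cases "a' = []")
    case True then show ?thesis using nil_ok[OF no0] by simp
  next
    case False
    then obtain a where a: "a' = i # a" "a \<in> A" using a' by auto
    from F a(2) obtain e0 where e0: "reach Q 0 a e0" by blast
    have FA: "\<forall>e. reach Q 0 a e \<longrightarrow> e \<noteq> -1 \<and> (\<forall>s. nrep s \<and> reach Q 0 s e \<longrightarrow> s = a)"
      using F a(2) by blast
    have e0n: "e0 \<noteq> -1" using FA e0 by blast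
    have hd: "j \<in> T \<and> (\<exists>k. (0, k) \<in> Q j \<and> k \<in> ?S \<and> reach Q k r e0)" if "a = j # r" for j r
    proof -
      from e0 that obtain z where z: "(0, z) \<in> Q j" "reach Q z r e0" by (auto elim: reach_ConsE)
      have "z \<noteq> -1" using z(2) reach_sink[OF sink] e0n by blast
      moreover have "z \<in> Ev D" "z \<noteq> 0" using E z(1) by blast+
      ultimately show ?thesis using Z z by blast
    qed
    have ex: "\<exists>e. reach Q' 0 a' e"
    proof (cases a)
      case Nil
      then have "reach Q' 0 a' m" using a(1) f0i by (simp add: reach_ConsI)
      then show ?thesis by blast
    next
      case (Cons j r)
      from hd[OF Cons] obtain k where k: "j \<in> T" "(0, k) \<in> Q j" "k \<in> ?S" "reach Q k r e0" by blast
      have ji: "j \<noteq> i" using k(1) iT by blast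
      have "reach Q' k r e0" using reach_transfer[OF to] k(3,4) by blast
      then have "reach Q' m (j # r) e0" using fmj[OF ji] k(2) reach_ConsI by fast
      then have "reach Q' 0 a' e0" using a(1) Cons f0i reach_ConsI by fast
      then show ?thesis by blast
    qed
    have all: "e \<noteq> -1 \<and> (\<forall>s. nrep s \<and> reach Q' 0 s e \<longrightarrow> s = a')" if re: "reach Q' 0 a' e" for e
    proof -
      from re a(1) obtain z where "(0, z) \<in> Q' i" "reach Q' z a e" by (auto elim: reach_ConsE)
      then have rm: "reach Q' m a e" using f0i by metis
      show ?thesis
      proof (cases a)
        case Nil
        then have em: "e = m" using rm by simp
        have "s = a'" if s: "nrep s" "reach Q' 0 s m" for s
        proof (cases s)
          case Nil then show ?thesis using s m by simp
        next
          case (Cons j s1)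
          from s(2) Cons obtain z where z: "(0, z) \<in> Q' j" "reach Q' z s1 m" by (auto elim: reach_ConsE)
          have ji: "j = i"
          proof (rule ccontr)
            assume "j \<noteq> i"
            then have "z = -1" using f0j z(1) by blast
            then have "m = -1" using reach_sink[OF sink'] z(2) by blast
            then show False using m by simp
          qed
          then have zm: "z = m" using f0i z(1) by blast
          show ?thesis
          proof (cases s1)
            case Nil then show ?thesis using Cons ji a(1) \<open>a = []\<close> by simp
          next
            case (Cons j2 s2)
            have j2: "j2 \<noteq> i" using nrep_hd[of j j2 s2] s(1) \<open>s = j # s1\<close> Cons ji by simp
            have "m \<in> ?S" using fromm[OF j2] z(2) zm Cons by blast
            then show ?thesis using mS by blast
          qed
        qed
        then show ?thesis using em m by auto
      next
        case (Cons j r)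
        have ji: "j \<noteq> i" using hd[OF Cons] iT by blast
        have rq: "reach Q 0 a e" and eS: "e \<in> ?S" using fromm[OF ji] rm Cons by blast+
        have en: "e \<noteq> -1" and uq: "\<forall>s. nrep s \<and> reach Q 0 s e \<longrightarrow> s = a" using FA rq by blast+
        have "s = a'" if s: "nrep s" "reach Q' 0 s e" for s
        proof (cases s)
          case Nil then show ?thesis using s eS by simp
        next
          case (Cons j1 s1)
          from s(2) Cons obtain z where z: "(0, z) \<in> Q' j1" "reach Q' z s1 e" by (auto elim: reach_ConsE)
          have ji1: "j1 = i"
          proof (rule ccontr)
            assume "j1 \<noteq> i"
            then have "z = -1" using f0j z(1) by blast
            then have "e = -1" using reach_sink[OF sink'] z(2) by blast
            then show False using en by simp
          qed
          then have zm: "z = m" using f0i z(1) by blast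
          show ?thesis
          proof (cases s1)
            case Nil then show ?thesis using z(2) zm eS mS by simp
          next
            case (Cons j2 s2)
            have j2: "j2 \<noteq> i" using nrep_hd[of j1 j2 s2] s(1) \<open>s = j1 # s1\<close> Cons ji1 by simp
            have "reach Q 0 s1 e" using fromm[OF j2] z(2) zm Cons by blast
            moreover have "nrep s1" using nrep_tl s(1) \<open>s = j1 # s1\<close> by blast
            ultimately have "s1 = a" using uq by blast
            then show ?thesis using \<open>s = j1 # s1\<close> ji1 a(1) by simp
          qed
        qed
        then show ?thesis using en by blast
      qed
    qed
    show ?thesis using ex all by blast
  qed
  have pos': "\<forall>x\<in>insert m D. x \<ge> 1" using pos m by auto
  show ?thesis
    unfolding good_def
    apply (intro conjI)
         apply (fact pos')
        apply (fact E')
       apply (fact sink')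
      apply (fact mm')
     apply (fact Z')
    using F' by blast
qed


definition Qc :: "int set \<Rightarrow> (nat \<Rightarrow> (int \<times> int) set) \<Rightarrow> int set \<Rightarrow> (nat \<Rightarrow> (int \<times> int) set) \<Rightarrow> nat \<Rightarrow> (int \<times> int) set" where
  "Qc D1 Q1 D2 Q2 = (\<lambda>j. uQ D1 Q1 j \<union> uQ D2 Q2 j
           \<union> {(0, k) | k. (0, k) \<in> Q1 j \<union> Q2 j \<and> k \<in> D1 \<union> D2}
           \<union> (if \<exists>k. (0, k) \<in> Q1 j \<union> Q2 j \<and> k \<in> D1 \<union> D2 then {} else {(0, -1)}))"

lemma Qc_sym: "Qc D1 Q1 D2 Q2 = Qc D2 Q2 D1 Q1"
  unfolding Qc_def by (rule ext) (simp only: Un_ac)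

lemma conj_side:
  assumes g1: "good D1 Q1 T1 A1" and g2: "good D2 Q2 T2 A2"
    and dD: "D1 \<inter> D2 = {}" and dT: "T1 \<inter> T2 = {}" and a: "a \<in> A1"
  shows "(\<exists>e. reach (Qc D1 Q1 D2 Q2) 0 a e) \<and>
        (\<forall>e. reach (Qc D1 Q1 D2 Q2) 0 a e \<longrightarrow> e \<noteq> -1 \<and>
           (\<forall>s. nrep s \<and> reach (Qc D1 Q1 D2 Q2) 0 s e \<longrightarrow> s = a))"
proof -
  define Q' where "Q' = Qc D1 Q1 D2 Q2"
  have pos1: "\<forall>x\<in>D1. x \<ge> 1" and E1: "\<forall>j x y. (x, y) \<in> Q1 j \<longrightarrow> x \<in> Ev D1 \<and> y \<in> Ev D1 \<and> y \<noteq> 0"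
    and sink1: "\<forall>j y. (-1, y) \<in> Q1 j \<longrightarrow> y = -1" and mm1: "\<forall>j. (-1, -1) \<in> Q1 j"
    and Z1: "\<forall>j k. (0, k) \<in> Q1 j \<and> k \<noteq> -1 \<longrightarrow> j \<in> T1"
    and F1: "\<forall>a\<in>A1. (\<exists>e. reach Q1 0 a e) \<and>
        (\<forall>e. reach Q1 0 a e \<longrightarrow> e \<noteq> -1 \<and> (\<forall>s. nrep s \<and> reach Q1 0 s e \<longrightarrow> s = a))"
    using g1 unfolding good_def by blast+
  have pos2: "\<forall>x\<in>D2. x \<ge> 1" and E2: "\<forall>j x y. (x, y) \<in> Q2 j \<longrightarrow> x \<in> Ev D2 \<and> y \<in> Ev D2 \<and> y \<noteq> 0"
    and sink2: "\<forall>j y. (-1, y) \<in> Q2 j \<longrightarrow> y = -1" and mm2: "\<forall>j. (-1, -1) \<in> Q2 j"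
    and Z2: "\<forall>j k. (0, k) \<in> Q2 j \<and> k \<noteq> -1 \<longrightarrow> j \<in> T2"
    using g2 unfolding good_def by blast+
  let ?S1 = "Ev D1 - {0}" and ?S2 = "Ev D2 - {0}"
  have n1: "-1 \<notin> D1" "0 \<notin> D1" using pos1 by force+
  have n2: "-1 \<notin> D2" "0 \<notin> D2" using pos2 by force+
  have to1: "\<forall>j x y. x \<in> ?S1 \<longrightarrow> (x, y) \<in> Q1 j \<longrightarrow> (x, y) \<in> Q' j \<and> y \<in> ?S1"
    using E1 unfolding Q'_def Qc_def uQ_def by auto
  have from1: "\<forall>j x y. x \<in> ?S1 \<longrightarrow> (x, y) \<in> Q' j \<longrightarrow> (x, y) \<in> Q1 j \<and> y \<in> ?S1"
  proof (intro allI impI)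
    fix j x y assume x: "x \<in> ?S1" and xy: "(x, y) \<in> Q' j"
    then have "(x, y) \<in> uQ D1 Q1 j \<or> (x, y) \<in> uQ D2 Q2 j" unfolding Q'_def Qc_def by (auto split: if_splits)
    then show "(x, y) \<in> Q1 j \<and> y \<in> ?S1"
    proof
      assume "(x, y) \<in> uQ D1 Q1 j" then show ?thesis unfolding uQ_def by auto
    next
      assume h: "(x, y) \<in> uQ D2 Q2 j"
      then have "x \<in> ?S2" unfolding uQ_def by auto
      with x dD have "x = -1" unfolding Ev_def by auto
      then have "y = -1" using sink2 h unfolding uQ_def by auto
      then show ?thesis using \<open>x = -1\<close> mm1 by (auto simp: Ev_def)
    qed
  qed
  have from2: "\<forall>j x y. x \<in> ?S2 \<longrightarrow> (x, y) \<in> Q' j \<longrightarrow> (x, y) \<in> Q2 j \<and> y \<in> ?S2"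
  proof (intro allI impI)
    fix j x y assume x: "x \<in> ?S2" and xy: "(x, y) \<in> Q' j"
    then have "(x, y) \<in> uQ D1 Q1 j \<or> (x, y) \<in> uQ D2 Q2 j" unfolding Q'_def Qc_def by (auto split: if_splits)
    then show "(x, y) \<in> Q2 j \<and> y \<in> ?S2"
    proof
      assume "(x, y) \<in> uQ D2 Q2 j" then show ?thesis unfolding uQ_def by auto
    next
      assume h: "(x, y) \<in> uQ D1 Q1 j"
      then have "x \<in> ?S1" unfolding uQ_def by auto
      with x dD have "x = -1" unfolding Ev_def by auto
      then have "y = -1" using sink1 h unfolding uQ_def by auto
      then show ?thesis using \<open>x = -1\<close> mm2 by (auto simp: Ev_def)
    qed
  qed
  have from0: "k = -1 \<or> ((0, k) \<in> Q1 j \<and> k \<in> D1) \<or> ((0, k) \<in> Q2 j \<and> k \<in> D2)"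
    if "(0, k) \<in> Q' j" for j k
  proof -
    have "(k = -1) \<or> ((0, k) \<in> Q1 j \<union> Q2 j \<and> k \<in> D1 \<union> D2)"
      using that unfolding Q'_def Qc_def uQ_def by (auto split: if_splits)
    moreover have "(0, k) \<in> Q1 j \<Longrightarrow> k \<in> D2 \<Longrightarrow> False"
      using E1 dD n2 unfolding Ev_def by blast
    moreover have "(0, k) \<in> Q2 j \<Longrightarrow> k \<in> D1 \<Longrightarrow> False"
      using E2 dD n1 unfolding Ev_def by blast
    ultimately show ?thesis by blast
  qed
  have fm1: "\<forall>k. (0, k) \<in> Q1 j \<longrightarrow> k \<notin> D1" if "(0, -1) \<in> Q' j" for j
    using that n1 n2 unfolding Q'_def Qc_def uQ_def by (auto split: if_splits)
  have to0: "(0, k) \<in> Q' j" if "(0, k) \<in> Q1 j" "k \<in> D1" for j k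
    using that unfolding Q'_def Qc_def by auto
  have sink': "\<forall>j y. (-1, y) \<in> Q' j \<longrightarrow> y = -1"
    using sink1 sink2 unfolding Q'_def Qc_def uQ_def by (auto split: if_splits)
  have no0: "\<forall>j x. (x, 0) \<notin> Q' j"
    using E1 E2 n1 n2 unfolding Q'_def Qc_def uQ_def by (auto split: if_splits)
  from F1 a obtain e0 where e0: "reach Q1 0 a e0" by blast
  have FA: "\<forall>e. reach Q1 0 a e \<longrightarrow> e \<noteq> -1 \<and> (\<forall>s. nrep s \<and> reach Q1 0 s e \<longrightarrow> s = a)"
    using F1 a by blast
  have e0n: "e0 \<noteq> -1" using FA e0 by blast
  have "(\<exists>e. reach Q' 0 a e) \<and>
        (\<forall>e. reach Q' 0 a e \<longrightarrow> e \<noteq> -1 \<and> (\<forall>s. nrep s \<and> reach Q' 0 s e \<longrightarrow> s = a))"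
  proof (cases a)
    case Nil then show ?thesis using nil_ok[OF no0] by simp
  next
    case (Cons j r)
    from e0 Cons obtain z where z: "(0, z) \<in> Q1 j" "reach Q1 z r e0" by (auto elim: reach_ConsE)
    have "z \<noteq> -1" using z(2) reach_sink[OF sink1] e0n by blast
    moreover have "z \<in> Ev D1" "z \<noteq> 0" using E1 z(1) by blast+
    ultimately have zD: "z \<in> D1" unfolding Ev_def by auto
    have jT: "j \<in> T1" using Z1 z(1) \<open>z \<noteq> -1\<close> by blast
    have ex: "reach Q' 0 a e0"
    proof -
      have "reach Q' z r e0" using reach_transfer[OF to1] z(2) zD n1 by (auto simp: Ev_def)
      then show ?thesis using Cons to0[OF z(1) zD] reach_ConsI by fast
    qed
    have all: "e \<noteq> -1 \<and> (\<forall>s. nrep s \<and> reach Q' 0 s e \<longrightarrow> s = a)" if re: "reach Q' 0 a e" for e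
    proof -
      from re Cons obtain z' where z': "(0, z') \<in> Q' j" "reach Q' z' r e" by (auto elim: reach_ConsE)
      have "z' \<noteq> -1"
      proof
        assume "z' = -1"
        then show False using fm1[of j] z'(1) z(1) zD by blast
      qed
      moreover have "\<not> ((0, z') \<in> Q2 j \<and> z' \<in> D2)"
        using Z2 jT dT n2 by blast
      ultimately have z'1: "(0, z') \<in> Q1 j" "z' \<in> D1" using from0[OF z'(1)] by blast+
      have "reach Q1 z' r e \<and> e \<in> ?S1" using reach_transfer[OF from1] z'(2) z'1(2) n1 by (auto simp: Ev_def)
      then have rq: "reach Q1 0 a e" and eS: "e \<in> ?S1" using Cons z'1(1) reach_ConsI by fast+
      have en: "e \<noteq> -1" and uq: "\<forall>s. nrep s \<and> reach Q1 0 s e \<longrightarrow> s = a" using FA rq by blast+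
      have "s = a" if s: "nrep s" "reach Q' 0 s e" for s
      proof (cases s)
        case Nil then show ?thesis using s eS by simp
      next
        case (Cons j1 s1)
        from s(2) Cons obtain z1 where z1: "(0, z1) \<in> Q' j1" "reach Q' z1 s1 e" by (auto elim: reach_ConsE)
        have "z1 \<noteq> -1" using z1(2) reach_sink[OF sink'] en by blast
        moreover have "\<not> ((0, z1) \<in> Q2 j1 \<and> z1 \<in> D2)"
        proof
          assume h: "(0, z1) \<in> Q2 j1 \<and> z1 \<in> D2"
          then have "e \<in> ?S2" using reach_transfer[OF from2] z1(2) n2 by (auto simp: Ev_def)
          then show False using eS en dD by (auto simp: Ev_def)
        qed
        ultimately have z11: "(0, z1) \<in> Q1 j1" "z1 \<in> D1" using from0[OF z1(1)] by blast+
        have "reach Q1 z1 s1 e" using reach_transfer[OF from1] z1(2) z11(2) n1 by (auto simp: Ev_def)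
        then have "reach Q1 0 s e" using Cons z11(1) reach_ConsI by fast
        then show ?thesis using uq s(1) by blast
      qed
      then show ?thesis using en by blast
    qed
    show ?thesis using ex all by blast
  qed
  then show ?thesis unfolding Q'_def .
qed

lemma good_conj:
  assumes g1: "good D1 Q1 T1 A1" and g2: "good D2 Q2 T2 A2"
    and dD: "D1 \<inter> D2 = {}" and dT: "T1 \<inter> T2 = {}"
  shows "good (D1 \<union> D2) (Qc D1 Q1 D2 Q2) (T1 \<union> T2) (A1 \<union> A2)"
proof -
  have pos1: "\<forall>x\<in>D1. x \<ge> 1" and E1: "\<forall>j x y. (x, y) \<in> Q1 j \<longrightarrow> x \<in> Ev D1 \<and> y \<in> Ev D1 \<and> y \<noteq> 0"
    and sink1: "\<forall>j y. (-1, y) \<in> Q1 j \<longrightarrow> y = -1" and mm1: "\<forall>j. (-1, -1) \<in> Q1 j"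
    and Z1: "\<forall>j k. (0, k) \<in> Q1 j \<and> k \<noteq> -1 \<longrightarrow> j \<in> T1"
    using g1 unfolding good_def by blast+
  have pos2: "\<forall>x\<in>D2. x \<ge> 1" and E2: "\<forall>j x y. (x, y) \<in> Q2 j \<longrightarrow> x \<in> Ev D2 \<and> y \<in> Ev D2 \<and> y \<noteq> 0"
    and sink2: "\<forall>j y. (-1, y) \<in> Q2 j \<longrightarrow> y = -1" and mm2: "\<forall>j. (-1, -1) \<in> Q2 j"
    and Z2: "\<forall>j k. (0, k) \<in> Q2 j \<and> k \<noteq> -1 \<longrightarrow> j \<in> T2"
    using g2 unfolding good_def by blast+
  have n1: "-1 \<notin> D1" "0 \<notin> D1" using pos1 by force+
  have n2: "-1 \<notin> D2" "0 \<notin> D2" using pos2 by force+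
  have pos: "\<forall>x\<in>D1 \<union> D2. x \<ge> 1" using pos1 pos2 by blast
  have E: "\<forall>j x y. (x, y) \<in> Qc D1 Q1 D2 Q2 j \<longrightarrow> x \<in> Ev (D1 \<union> D2) \<and> y \<in> Ev (D1 \<union> D2) \<and> y \<noteq> 0"
    using E1 E2 n1 n2 unfolding Qc_def uQ_def by (auto simp: Ev_def split: if_splits)
  have sink: "\<forall>j y. (-1, y) \<in> Qc D1 Q1 D2 Q2 j \<longrightarrow> y = -1"
    using sink1 sink2 unfolding Qc_def uQ_def by (auto split: if_splits)
  have mm: "\<forall>j. (-1, -1) \<in> Qc D1 Q1 D2 Q2 j"
    using mm1 unfolding Qc_def uQ_def by (auto simp: Ev_def)
  have Z: "\<forall>j k. (0, k) \<in> Qc D1 Q1 D2 Q2 j \<and> k \<noteq> -1 \<longrightarrow> j \<in> T1 \<union> T2"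
    using Z1 Z2 unfolding Qc_def uQ_def by (auto split: if_splits)
  have F: "\<forall>a\<in>A1 \<union> A2. (\<exists>e. reach (Qc D1 Q1 D2 Q2) 0 a e) \<and>
        (\<forall>e. reach (Qc D1 Q1 D2 Q2) 0 a e \<longrightarrow> e \<noteq> -1 \<and>
           (\<forall>s. nrep s \<and> reach (Qc D1 Q1 D2 Q2) 0 s e \<longrightarrow> s = a))"
  proof
    fix a assume "a \<in> A1 \<union> A2"
    then show "(\<exists>e. reach (Qc D1 Q1 D2 Q2) 0 a e) \<and>
        (\<forall>e. reach (Qc D1 Q1 D2 Q2) 0 a e \<longrightarrow> e \<noteq> -1 \<and>
           (\<forall>s. nrep s \<and> reach (Qc D1 Q1 D2 Q2) 0 s e \<longrightarrow> s = a))"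
    proof
      assume "a \<in> A1" then show ?thesis using conj_side[OF g1 g2 dD dT] by blast
    next
      assume "a \<in> A2"
      have dD': "D2 \<inter> D1 = {}" "T2 \<inter> T1 = {}" using dD dT by blast+
      show ?thesis using conj_side[OF g2 g1 dD' \<open>a \<in> A2\<close>] unfolding Qc_sym[of D2] .
    qed
  qed
  show ?thesis
    unfolding good_def
    apply (intro conjI)
         apply (fact pos)
        apply (fact E)
       apply (fact sink)
      apply (fact mm)
     apply (fact Z)
    apply (fact F)
    done
qed


lemma pre0: "Uphi \<phi> D Q pre \<Longrightarrow> pre 0 = top \<and> (\<forall>x\<in>D. x \<ge> 1)"
  by (induction rule: Uphi.induct) auto

lemma CP_nil: "CP [] = {}" unfolding CP_def by simp

lemma main: "Uphi \<phi> D Q pre \<Longrightarrow> dbi_normal \<phi> \<Longrightarrow> good D Q (ta \<phi>) (agSeq ` RootP \<phi>)"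
proof (induction rule: Uphi.induct)
  case (base \<xi> m i)
  have "agSeq ` RootP (Bel i \<xi>) = {[], [i]}"
    unfolding AS_eq mt_prop[OF base(1)] CP_node CP_nil by auto
  then show ?case using good_base[OF base(2), of i] by simp
next
  case (box \<psi> D Q pre m i)
  have np: "\<not> is_prop \<psi>" using uphi_np[OF box(1)] .
  have np2: "\<forall>a b. \<psi> = Conj a b \<longrightarrow> \<not> is_prop a" using uphi_conj_np box(1) by blast
  from box(5) have dn: "dbi_normal \<psi> \<and> i \<notin> ta \<psi>"
    by (cases rule: dbi_normal.cases) (use np np2 in auto)
  have AS: "agSeq ` RootP (Bel i \<psi>) = insert [] ((#) i ` (agSeq ` RootP \<psi>))"
    unfolding AS_eq[of "Bel i \<psi>"] mt_box[OF np np2] relabel_eq CP_node AS_eq[of \<psi>] ..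
  show ?case unfolding AS using good_box[OF box(4)[OF conjunct1[OF dn]] box(2,3) conjunct2[OF dn]] by simp
next
  case (boxconj \<xi> \<psi> D Q pre m i)
  have np: "\<not> is_prop \<psi>" using uphi_np[OF boxconj(2)] .
  from boxconj(6) have dn: "dbi_normal \<psi> \<and> i \<notin> ta \<psi>"
  proof (cases rule: dbi_normal.cases)
    case 1 then show ?thesis using np by simp
  next
    case 2
    then have "dbi_normal \<xi>" by (auto elim: dbi_normal.cases)
    then show ?thesis using dbi_np boxconj(1) by blast
  next
    case 3 then show ?thesis by simp
  qed
  have AS: "agSeq ` RootP (Bel i (Conj \<xi> \<psi>)) = insert [] ((#) i ` (agSeq ` RootP \<psi>))"
    unfolding AS_eq[of "Bel i (Conj \<xi> \<psi>)"] mt_boxconj[OF boxconj(1) np] relabel_eq CP_node AS_eq[of \<psi>] ..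
  show ?case unfolding AS using good_box[OF boxconj(5)[OF conjunct1[OF dn]] boxconj(3,4) conjunct2[OF dn]] by simp
next
  case (conj \<psi> D1 Q1 p1 \<theta> D2 Q2 p2)
  from conj(6) have dn: "dbi_normal \<psi>" "dbi_normal \<theta>" "ta \<psi> \<inter> ta \<theta> = {}"
    by (auto elim: dbi_normal.cases)
  have AS: "agSeq ` RootP (Conj \<psi> \<theta>) = agSeq ` RootP \<psi> \<union> agSeq ` RootP \<theta>"
    unfolding AS_eq mt_conj CP_append by blast
  have "good (D1 \<union> D2) (Qc D1 Q1 D2 Q2) (ta \<psi> \<union> ta \<theta>) (agSeq ` RootP \<psi> \<union> agSeq ` RootP \<theta>)"
    using good_conj[OF conj(4)[OF dn(1)] conj(5)[OF dn(2)] conj(3) dn(3)] .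
  then show ?case unfolding AS Qc_def by simp
qed

lemma cluster_reach:
  "x \<in> cluster (RU n R V D Q pre v \<alpha>) w s \<Longrightarrow> reach Q (snd w) s (snd x)"
proof (induction s arbitrary: w)
  case Nil then show ?case by simp
next
  case (Cons i s)
  then obtain u where u: "(w, u) \<in> RU n R V D Q pre v \<alpha> i" "x \<in> cluster (RU n R V D Q pre v \<alpha>) u s"
    by auto
  then have "(snd w, snd u) \<in> Q i" unfolding RU_def by auto
  with Cons.IH[OF u(2)] show ?case using reach_ConsI by fast
qed

theorem theorem10:
  fixes n :: nat and \<phi> :: "'p fm"
    and R :: "nat \<Rightarrow> ('s \<times> 's) set" and V :: "'p \<Rightarrow> 's set" and v :: 's
    and D :: "int set" and Q :: "nat \<Rightarrow> (int \<times> int) set" and pre :: "int \<Rightarrow> 'p fm"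
  assumes "n > 1"
    and "agents \<phi> \<subseteq> {1..n}"
    and "dbi_normal \<phi>"
    and "Uphi \<phi> D Q pre"
  shows "sat R V v (pre 0)
    \<and> weakly_privatized n (RU n R V D Q pre v 0) (v, 0) \<phi>"
proof
  have "pre 0 = top" using pre0[OF assms(4)] by blast
  then show "sat R V v (pre 0)" by (simp add: top_def)
next
  have g: "good D Q (ta \<phi>) (agSeq ` RootP \<phi>)" using main[OF assms(4,3)] .
  then have F: "\<forall>a\<in>agSeq ` RootP \<phi>. \<forall>e. reach Q 0 a e \<longrightarrow> (\<forall>s. nrep s \<and> reach Q 0 s e \<longrightarrow> s = a)"
    unfolding good_def by blast
  show "weakly_privatized n (RU n R V D Q pre v 0) (v, 0) \<phi>"
    unfolding weakly_privatized_def
  proof (intro ballI allI impI)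
    fix \<sigma> s assume \<sigma>: "\<sigma> \<in> RootP \<phi>" and s: "nsr n s \<and> s \<noteq> agSeq \<sigma>"
    show "cluster (RU n R V D Q pre v 0) (v, 0) (agSeq \<sigma>) \<inter> cluster (RU n R V D Q pre v 0) (v, 0) s = {}"
    proof (rule ccontr)
      assume "cluster (RU n R V D Q pre v 0) (v, 0) (agSeq \<sigma>) \<inter> cluster (RU n R V D Q pre v 0) (v, 0) s \<noteq> {}"
      then obtain x where x: "x \<in> cluster (RU n R V D Q pre v 0) (v, 0) (agSeq \<sigma>)"
        "x \<in> cluster (RU n R V D Q pre v 0) (v, 0) s" by blast
      have "reach Q 0 (agSeq \<sigma>) (snd x)" using cluster_reach[OF x(1)] by simp
      moreover have "reach Q 0 s (snd x)" using cluster_reach[OF x(2)] by simp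
      moreover have "nrep s" using nsr_nrep s by blast
      ultimately have "s = agSeq \<sigma>" using F \<sigma> by blast
      then show False using s by blast
    qed
  qed
qed

end
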